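(* Let $G=(V,E)$ be an event graph and let $\mathcal C$ be any sink component of $\mathrm{dec}(G)$. Then for every vertex $v\in V$ there exists a subset $Y\subseteq\mathcal U_{|V}$ such that $(v,Y)$ is a node of $\mathcal C$.
   Context: An event graph is a finite, connected, undirected graph $G=(V,E)$, with $n=|V|$, in which every node $v$ carries a label that is either $\mathtt{i}x_v$ (insertion of $x_v$) or $\mathtt{d}x_v$ (deletion of $x_v$), where $x_v$ is an element of a finite universe $\mathcal U$. Write $\mathcal U_{|V}=\{x_v : v\in V\}$. It is assumed that for each $x\in\mathcal U_{|V}$ at least one node is labeled $\mathtt{i}x$ and at least one node is labeled $\mathtt{d}x$. The decorated graph $\mathrm{dec}(G)$ is the directed graph with vertex set $V\times 2^{\mathcal U_{|V}}$ in which $((u,X),(v,Y))$ is an edge if and only if $\{u,v\}\in E$ and $Y=X\cup\{x_v\}$ when $v$ is labeled $\mathtt{i}x_v$, respectively $Y=X\setminus\{x_v\}$ when $v$ is labeled $\mathtt{d}x_v$. A sink component of $\mathrm{dec}(G)$ is a strongly connected component of $\mathrm{dec}(G)$ from which no edge leads to a different strongly connected component. *)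

theory Defs
  imports Main
begin

datatype 'u event = Ins 'u | Del 'u

fun elem :: "'u event \<Rightarrow> 'u" where
  "elem (Ins x) = x" | "elem (Del x) = x"

definition event_graph :: "'v set \<Rightarrow> 'v set set \<Rightarrow> ('v \<Rightarrow> 'u event) \<Rightarrow> bool" where
  "event_graph V E lab \<longleftrightarrow>
     finite V \<and> V \<noteq> {} \<and>
     (\<forall>e\<in>E. e \<subseteq> V \<and> card e = 2) \<and>
     (\<forall>u\<in>V. \<forall>v\<in>V. (u, v) \<in> {(a, b). {a, b} \<in> E}\<^sup>*) \<and>
     (\<forall>x \<in> elem ` lab ` V. (\<exists>v\<in>V. lab v = Ins x) \<and> (\<exists>v\<in>V. lab v = Del x))"

definition univ_V :: "'v set \<Rightarrow> ('v \<Rightarrow> 'u event) \<Rightarrow> 'u set" where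
  "univ_V V lab = elem ` lab ` V"

fun apply_ev :: "'u event \<Rightarrow> 'u set \<Rightarrow> 'u set" where
  "apply_ev (Ins x) X = X \<union> {x}" | "apply_ev (Del x) X = X - {x}"

definition dec_nodes :: "'v set \<Rightarrow> ('v \<Rightarrow> 'u event) \<Rightarrow> ('v \<times> 'u set) set" where
  "dec_nodes V lab = V \<times> Pow (univ_V V lab)"

definition dec_edges :: "'v set \<Rightarrow> 'v set set \<Rightarrow> ('v \<Rightarrow> 'u event)
    \<Rightarrow> (('v \<times> 'u set) \<times> ('v \<times> 'u set)) set" where
  "dec_edges V E lab = {((u, X), (v, Y)).
      (u, X) \<in> dec_nodes V lab \<and> (v, Y) \<in> dec_nodes V lab \<and>
      {u, v} \<in> E \<and> Y = apply_ev (lab v) X}"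

definition scc :: "'a set \<Rightarrow> ('a \<times> 'a) set \<Rightarrow> 'a set \<Rightarrow> bool" where
  "scc N R C \<longleftrightarrow> (\<exists>c\<in>N. C = {d \<in> N. (c, d) \<in> R\<^sup>* \<and> (d, c) \<in> R\<^sup>*})"

definition sink_component :: "'a set \<Rightarrow> ('a \<times> 'a) set \<Rightarrow> 'a set \<Rightarrow> bool" where
  "sink_component N R C \<longleftrightarrow> scc N R C \<and> (\<forall>a\<in>C. \<forall>b. (a, b) \<in> R \<longrightarrow> b \<in> C)"

end

theory Submission
  imports Defs
begin

theorem mainTheorem1:
  fixes V :: "'v set" and E :: "'v set set" and lab :: "'v \<Rightarrow> 'u event"
    and C :: "('v \<times> 'u set) set"
  assumes "event_graph V E lab"
    and "sink_component (dec_nodes V lab) (dec_edges V E lab) C"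
  shows "\<forall>v\<in>V. \<exists>Y. Y \<subseteq> univ_V V lab \<and> (v, Y) \<in> C"
proof -
  let ?N = "dec_nodes V lab" and ?R = "dec_edges V E lab"
  from assms(2) obtain c where cN: "c \<in> ?N" and Cdef: "C = {d \<in> ?N. (c, d) \<in> ?R\<^sup>* \<and> (d, c) \<in> ?R\<^sup>*}"
    and closed: "\<forall>a\<in>C. \<forall>b. (a, b) \<in> ?R \<longrightarrow> b \<in> C"
    unfolding sink_component_def scc_def by blast
  have CN: "C \<subseteq> ?N" using Cdef by blast
  have cC: "c \<in> C" using Cdef cN by blast
  obtain u X where c: "c = (u, X)" by (cases c)
  have uV: "u \<in> V" using cN c by (simp add: dec_nodes_def)
  have EV: "\<And>e. e \<in> E \<Longrightarrow> e \<subseteq> V" using assms(1) by (simp add: event_graph_def)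
  have conn: "\<And>v. v \<in> V \<Longrightarrow> (u, v) \<in> {(a, b). {a, b} \<in> E}\<^sup>*"
    using assms(1) uV by (simp add: event_graph_def)
  have step: "\<exists>Y. (w, Y) \<in> C" if "(u, w) \<in> {(a, b). {a, b} \<in> E}\<^sup>*" for w
    using that
  proof (induction rule: rtrancl_induct)
    case base
    then show ?case using cC c by blast
  next
    case (step b d)
    then obtain Y where bY: "(b, Y) \<in> C" by blast
    have bdE: "{b, d} \<in> E" using step by simp
    have dV: "d \<in> V" using EV[OF bdE] by blast
    have bN: "(b, Y) \<in> ?N" using bY CN by blast
    have el: "elem (lab d) \<in> univ_V V lab" using dV by (simp add: univ_V_def)
    have "apply_ev (lab d) Y \<subseteq> univ_V V lab"
      using bN el by (cases "lab d") (auto simp: dec_nodes_def)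
    then have dN: "(d, apply_ev (lab d) Y) \<in> ?N" using dV by (simp add: dec_nodes_def)
    have "((b, Y), (d, apply_ev (lab d) Y)) \<in> ?R"
      using bN dN bdE by (simp add: dec_edges_def)
    then show ?case using closed bY by blast
  qed
  show ?thesis
  proof
    fix v assume "v \<in> V"
    then obtain Y where "(v, Y) \<in> C" using step conn by blast
    moreover then have "Y \<subseteq> univ_V V lab" using CN by (auto simp: dec_nodes_def)
    ultimately show "\<exists>Y. Y \<subseteq> univ_V V lab \<and> (v, Y) \<in> C" by blast
  qed
qed

end
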